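(* Let $X$ be a real Banach space and $Y$ a linear subspace of $X$ with a norm $\|\cdot\|_Y$ such that $K:=U(Y)=\{g\in Y:\|g\|_Y\le1\}$ is a compact subset of $X$, and let $C_0$ be a constant with $\|g\|_X\le C_0\|g\|_Y$ for all $g\in Y$. Let $\lambda_1,\dots,\lambda_m\in X^*$ with $\|\lambda_j\|_{X^*}=1$, let $f\in K$ and $w:=\lambda(f)$, and assume $R(K_w)_X\neq0$. For $\mu>0$ define on $X$ the loss $$\mathcal{L}_\mu(g):=\|\lambda(g)-w\|+\mu\|g\|_Y .$$ Let $C>2$. Let $\mu>0$ and $\delta>0$ satisfy $\delta\le\mu^2$ and $$\varepsilon+2R(K(w,2\varepsilon))_X\le C\,R(K_w)_X,\qquad \varepsilon:=\mu\max(C_0,1+\mu),$$ (such $\mu$ exist, namely every sufficiently small $\mu>0$ satisfies this). Let $\Sigma\subset X$ satisfy $\operatorname{dist}(K,\Sigma\cap K)_X<\delta$, and let $\hat f\in\mathop{\rm argmin}_{g\in\Sigma}\mathcal{L}_\mu(g)$ be any minimizer. Then $$\|f-\hat f\|_X\le C\,R(K_w)_X .$$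
   Context: Convention: $\|g\|_Y:=\infty$ for $g\in X\setminus Y$. For $g\in X$, $\lambda(g):=(\lambda_1(g),\dots,\lambda_m(g))$; on $\mathbb{R}^m$, $\|v\|:=\big[\frac1m\sum_{j=1}^m|v_j|^2\big]^{1/2}$. For $A,B\subset X$, $\operatorname{dist}(A,B)_X:=\sup_{a\in A}\inf_{b\in B}\|a-b\|_X$. $K_w:=\{h\in K:\lambda(h)=w\}$, $K(w,\varepsilon):=\bigcup_{w'\in\mathbb{R}^m,\ \|w'-w\|\le\varepsilon}K_{w'}$. For $S\subset X$, $R(S)_X:=\inf\{r:\ S\subset B(z,r)_X\text{ for some }z\in X\}$ (Chebyshev radius), with $B(z,r)_X$ the ball of center $z$, radius $r$. *)

theory Defs
  imports "HOL-Analysis.Analysis"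
begin

text \<open>Vectors in R^m are represented as functions nat => real, only indices j < m matter.
  Normalised Euclidean norm on R^m.\<close>
definition vnorm :: "nat \<Rightarrow> (nat \<Rightarrow> real) \<Rightarrow> real" where
  "vnorm m v = sqrt ((1 / real m) * (\<Sum>j<m. (v j)\<^sup>2))"

definition fiber :: "nat \<Rightarrow> (nat \<Rightarrow> 'a \<Rightarrow> real) \<Rightarrow> 'a set \<Rightarrow> (nat \<Rightarrow> real) \<Rightarrow> 'a set" where
  "fiber m lam K w = {h \<in> K. \<forall>j<m. lam j h = w j}"

definition fiber_nbhd :: "nat \<Rightarrow> (nat \<Rightarrow> 'a \<Rightarrow> real) \<Rightarrow> 'a set \<Rightarrow> (nat \<Rightarrow> real) \<Rightarrow> real \<Rightarrow> 'a set" where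
  "fiber_nbhd m lam K w eps =
     (\<Union>w'\<in>{w'. vnorm m (\<lambda>j. w' j - w j) \<le> eps}. fiber m lam K w')"

definition cheb_radius :: "'a::real_normed_vector set \<Rightarrow> real" where
  "cheb_radius S = Inf {r. \<exists>z. S \<subseteq> cball z r}"

definition set_dist :: "'a::real_normed_vector set \<Rightarrow> 'a set \<Rightarrow> ereal" where
  "set_dist A B = (SUP a\<in>A. INF b\<in>B. ereal (norm (a - b)))"

definition loss :: "nat \<Rightarrow> (nat \<Rightarrow> 'a \<Rightarrow> real) \<Rightarrow> (nat \<Rightarrow> real) \<Rightarrow> 'a set \<Rightarrow> ('a \<Rightarrow> real)
                    \<Rightarrow> real \<Rightarrow> 'a \<Rightarrow> ereal" where
  "loss m lam w Y nY \<mu> g =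
     (if g \<in> Y then ereal (vnorm m (\<lambda>j. lam j g - w j) + \<mu> * nY g) else \<infinity>)"

end

theory Submission
  imports Defs
begin

lemma vnorm_L2: "vnorm m v = sqrt (1 / real m) * L2_set v {..<m}"
  unfolding vnorm_def L2_set_def by (metis real_sqrt_mult)

lemma vnorm_tri: "vnorm m (\<lambda>j. u j + v j) \<le> vnorm m u + vnorm m v"
proof -
  have "L2_set (\<lambda>j. u j + v j) {..<m} \<le> L2_set u {..<m} + L2_set v {..<m}"
    by (rule L2_set_triangle_ineq)
  then have "sqrt (1 / real m) * L2_set (\<lambda>j. u j + v j) {..<m} \<le> sqrt (1 / real m) * (L2_set u {..<m} + L2_set v {..<m})"
    by (rule mult_left_mono) simp
  then show ?thesis unfolding vnorm_L2 by (simp add: algebra_simps)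
qed

lemma vnorm_nonneg: "0 \<le> vnorm m v"
  unfolding vnorm_def by (simp add: sum_nonneg)

lemma vnorm_bound:
  assumes "m \<ge> 1" "0 \<le> B" "\<forall>j<m. \<bar>v j\<bar> \<le> B"
  shows "vnorm m v \<le> B"
proof -
  have "(\<Sum>j<m. (v j)\<^sup>2) \<le> (\<Sum>j<m. B\<^sup>2)"
    by (rule sum_mono) (use assms in \<open>metis abs_le_square_iff abs_of_nonneg lessThan_iff\<close>)
  then have "(\<Sum>j<m. (v j)\<^sup>2) \<le> real m * B\<^sup>2" by simp
  then have "(1 / real m) * (\<Sum>j<m. (v j)\<^sup>2) \<le> B\<^sup>2"
    using assms(1) by (simp add: field_simps)
  then show ?thesis unfolding vnorm_def
    using assms(2) real_sqrt_le_mono by (metis real_sqrt_abs abs_of_nonneg)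
qed

lemma cheb_two:
  fixes S :: "'a::real_normed_vector set"
  assumes "a \<in> S" "b \<in> S" "S \<subseteq> cball z0 r0"
  shows "norm (a - b) \<le> 2 * cheb_radius S"
proof -
  have "norm (a - b) / 2 \<le> cheb_radius S"
    unfolding cheb_radius_def
  proof (rule cInf_greatest)
    show "{r. \<exists>z. S \<subseteq> cball z r} \<noteq> {}" using assms(3) by blast
  next
    fix r assume "r \<in> {r. \<exists>z. S \<subseteq> cball z r}"
    then obtain z where "S \<subseteq> cball z r" by blast
    then have "dist z a \<le> r" "dist z b \<le> r" using assms by auto
    then have "norm (a - b) \<le> 2 * r"
      using dist_triangle[of a b z] by (simp add: dist_norm dist_commute norm_minus_commute)
    then show "norm (a - b) / 2 \<le> r" by simp
  qed
  then show ?thesis by simp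
qed

theorem theorem3p1:
  fixes Y :: "'a::banach set" and nY :: "'a \<Rightarrow> real"
    and C0 :: real and m :: nat and lam :: "nat \<Rightarrow> 'a \<Rightarrow> real"
    and f :: 'a and w :: "nat \<Rightarrow> real"
    and C \<mu> \<delta> \<epsilon> :: real and \<Sigma> :: "'a set" and fhat :: 'a
  assumes Ysub: "subspace Y"
    and nY_nonneg: "\<forall>g\<in>Y. 0 \<le> nY g"
    and nY_zero: "\<forall>g\<in>Y. nY g = 0 \<longleftrightarrow> g = 0"
    and nY_scale: "\<forall>g\<in>Y. \<forall>c. nY (c *\<^sub>R g) = \<bar>c\<bar> * nY g"
    and nY_tri: "\<forall>g\<in>Y. \<forall>h\<in>Y. nY (g + h) \<le> nY g + nY h"
    and K_compact: "compact {g \<in> Y. nY g \<le> 1}"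
    and C0: "\<forall>g\<in>Y. norm g \<le> C0 * nY g"
    and m_pos: "m \<ge> 1"
    and lam_lin: "\<forall>j<m. bounded_linear (lam j)"
    and lam_norm: "\<forall>j<m. onorm (lam j) = 1"
    and f_in: "f \<in> {g \<in> Y. nY g \<le> 1}"
    and w_def: "w = (\<lambda>j. lam j f)"
    and R_nz: "cheb_radius (fiber m lam {g \<in> Y. nY g \<le> 1} w) \<noteq> 0"
    and C_gt: "C > 2"
    and mu_pos: "\<mu> > 0" and delta_pos: "\<delta> > 0" and delta_le: "\<delta> \<le> \<mu>\<^sup>2"
    and eps_def: "\<epsilon> = \<mu> * max C0 (1 + \<mu>)"
    and mu_cond: "\<epsilon> + 2 * cheb_radius (fiber_nbhd m lam {g \<in> Y. nY g \<le> 1} w (2 * \<epsilon>))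
                  \<le> C * cheb_radius (fiber m lam {g \<in> Y. nY g \<le> 1} w)"
    and Sigma_dense: "set_dist {g \<in> Y. nY g \<le> 1} (\<Sigma> \<inter> {g \<in> Y. nY g \<le> 1}) < ereal \<delta>"
    and fhat_min: "fhat \<in> \<Sigma>" "\<forall>g\<in>\<Sigma>. loss m lam w Y nY \<mu> fhat \<le> loss m lam w Y nY \<mu> g"
  shows "norm (f - fhat) \<le> C * cheb_radius (fiber m lam {g \<in> Y. nY g \<le> 1} w)"
proof -
  define K where "K = {g \<in> Y. nY g \<le> 1}"
  have lamb: "\<bar>lam j x\<bar> \<le> norm x" if "j < m" for j x
    using onorm[of "lam j" x] lam_lin lam_norm that by auto
  have lamd: "lam j x - lam j y = lam j (x - y)" if "j < m" for j x y
    using lam_lin that by (simp add: linear_diff bounded_linear.linear)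
  have mx: "max C0 (1 + \<mu>) \<ge> 1 + \<mu>" by simp
  have epsge: "\<epsilon> \<ge> \<mu> * (1 + \<mu>)" unfolding eps_def using mu_pos mx
    by (intro mult_left_mono) auto
  have eps_pos: "\<epsilon> > 0" using epsge mu_pos mult_pos_pos[of \<mu> "1 + \<mu>"] by linarith
  obtain z0 r0 where r0: "K \<subseteq> cball z0 r0"
    using K_compact unfolding K_def using bounded_subset_cball compact_imp_bounded by blast
  have fK: "f \<in> K" using f_in K_def by simp
  have "(INF b\<in>\<Sigma> \<inter> K. ereal (norm (f - b))) < ereal \<delta>"
    using Sigma_dense fK unfolding set_dist_def K_def[symmetric]
    by (meson SUP_upper order.strict_trans1)
  then obtain g where gS: "g \<in> \<Sigma> \<inter> K" and gd: "norm (f - g) < \<delta>"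
    by (auto simp: INF_less_iff)
  have gY: "g \<in> Y" and gn: "nY g \<le> 1" using gS K_def by auto
  have vg: "vnorm m (\<lambda>j. lam j g - w j) \<le> \<delta>"
  proof (rule vnorm_bound)
    show "\<forall>j<m. \<bar>lam j g - w j\<bar> \<le> \<delta>"
    proof (intro allI impI)
      fix j assume j: "j < m"
      have "\<bar>lam j g - w j\<bar> = \<bar>lam j (g - f)\<bar>" using lamd[OF j] w_def by simp
      also have "\<dots> \<le> norm (g - f)" using lamb[OF j] .
      finally show "\<bar>lam j g - w j\<bar> \<le> \<delta>" using gd by (simp add: norm_minus_commute)
    qed
  qed (use m_pos delta_pos in auto)
  have "loss m lam w Y nY \<mu> fhat \<le> loss m lam w Y nY \<mu> g" using fhat_min gS by auto
  then have fhY: "fhat \<in> Y" and Lfh: "vnorm m (\<lambda>j. lam j fhat - w j) + \<mu> * nY fhat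
      \<le> vnorm m (\<lambda>j. lam j g - w j) + \<mu> * nY g"
    unfolding loss_def using gY by (auto split: if_splits)
  have "\<mu> * nY g \<le> \<mu>" using gn mu_pos by simp
  then have Lb: "vnorm m (\<lambda>j. lam j fhat - w j) + \<mu> * nY fhat \<le> \<mu> * (1 + \<mu>)"
    using Lfh vg delta_le by (simp add: algebra_simps power2_eq_square)
  have nfh0: "0 \<le> nY fhat" using nY_nonneg fhY by auto
  have vfh: "vnorm m (\<lambda>j. lam j fhat - w j) \<le> \<epsilon>"
    using Lb epsge mult_nonneg_nonneg[OF less_imp_le[OF mu_pos] nfh0] by linarith
  have "\<mu> * nY fhat \<le> \<mu> * (1 + \<mu>)" using Lb vnorm_nonneg[of m "\<lambda>j. lam j fhat - w j"] by linarith
  then have nfh: "nY fhat \<le> 1 + \<mu>" using mu_pos by simp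
  define N where "N = fiber_nbhd m lam K w (2 * \<epsilon>)"
  have NK: "N \<subseteq> K" unfolding N_def fiber_nbhd_def fiber_def by blast
  have inN: "h \<in> N" if "h \<in> K" "vnorm m (\<lambda>j. lam j h - w j) \<le> 2 * \<epsilon>" for h
  proof -
    have "h \<in> fiber m lam K (\<lambda>j. lam j h)" unfolding fiber_def using that by simp
    then show ?thesis unfolding N_def fiber_nbhd_def
      using that(2) by (intro UN_I[where a="\<lambda>j. lam j h"]) auto
  qed
  have fN: "f \<in> N"
    by (rule inN[OF fK]) (use eps_pos in \<open>simp add: w_def vnorm_def\<close>)
  have RN: "\<epsilon> + 2 * cheb_radius N \<le> C * cheb_radius (fiber m lam {g \<in> Y. nY g \<le> 1} w)"
    using mu_cond unfolding N_def K_def .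
  show ?thesis
  proof (cases "nY fhat \<le> 1")
    case True
    then have "fhat \<in> K" using fhY K_def by simp
    then have "fhat \<in> N" using vfh eps_pos by (intro inN) auto
    then have "norm (f - fhat) \<le> 2 * cheb_radius N"
      using fN NK r0 by (intro cheb_two) auto
    then show ?thesis using RN eps_pos by linarith
  next
    case False
    define s where "s = nY fhat"
    have s1: "s > 1" using False s_def by simp
    define h where "h = (1 / s) *\<^sub>R fhat"
    have hY: "h \<in> Y" unfolding h_def using fhY Ysub by (simp add: subspace_scale)
    have "nY h = 1" unfolding h_def using nY_scale fhY s1 s_def by simp
    then have hK: "h \<in> K" using hY K_def by simp
    have "fhat - h = (1 - 1 / s) *\<^sub>R fhat" unfolding h_def by (simp add: algebra_simps)
    moreover have "(1 - 1 / s) *\<^sub>R fhat \<in> Y" using fhY Ysub by (simp add: subspace_scale)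
    ultimately have "norm (fhat - h) \<le> C0 * nY ((1 - 1 / s) *\<^sub>R fhat)" using C0 by auto
    also have "nY ((1 - 1 / s) *\<^sub>R fhat) = s - 1"
      using nY_scale fhY s1 s_def by (simp add: field_simps)
    finally have d1: "norm (fhat - h) \<le> C0 * (s - 1)" .
    have "C0 * (s - 1) \<le> max C0 (1 + \<mu>) * (s - 1)" using s1 by (intro mult_right_mono) auto
    also have "\<dots> \<le> max C0 (1 + \<mu>) * \<mu>" using nfh s_def mu_pos
      by (intro mult_left_mono) auto
    finally have dh: "norm (fhat - h) \<le> \<epsilon>" using d1 eps_def by (simp add: mult.commute)
    have vh: "vnorm m (\<lambda>j. lam j h - w j) \<le> 2 * \<epsilon>"
    proof -
      have "vnorm m (\<lambda>j. lam j h - lam j fhat) \<le> \<epsilon>"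
      proof (rule vnorm_bound)
        show "\<forall>j<m. \<bar>lam j h - lam j fhat\<bar> \<le> \<epsilon>"
        proof (intro allI impI)
          fix j assume j: "j < m"
          have "\<bar>lam j h - lam j fhat\<bar> = \<bar>lam j (h - fhat)\<bar>" using lamd[OF j] by simp
          also have "\<dots> \<le> norm (h - fhat)" using lamb[OF j] .
          finally show "\<bar>lam j h - lam j fhat\<bar> \<le> \<epsilon>" using dh by (simp add: norm_minus_commute)
        qed
      qed (use m_pos eps_pos in auto)
      moreover have "vnorm m (\<lambda>j. lam j h - w j) \<le> vnorm m (\<lambda>j. lam j h - lam j fhat) + vnorm m (\<lambda>j. lam j fhat - w j)"
        using vnorm_tri[of m "\<lambda>j. lam j h - lam j fhat" "\<lambda>j. lam j fhat - w j"] by simp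
      ultimately show ?thesis using vfh by linarith
    qed
    have "h \<in> N" using hK vh by (rule inN)
    then have "norm (f - h) \<le> 2 * cheb_radius N"
      using fN NK r0 by (intro cheb_two) auto
    moreover have "norm (f - fhat) \<le> norm (f - h) + norm (h - fhat)"
      using norm_triangle_ineq[of "f - h" "h - fhat"] by simp
    ultimately show ?thesis using RN dh by (simp add: norm_minus_commute)
  qed
qed

end
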